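(* Let $\Omega\subset\mathbb{R}^2$ be a bounded domain with area $S_\Omega$, and let $\lambda>0$, $\beta>0$, $\eta>0$. Let $$\mathcal{X}=\mathcal{W}^{1,\infty}_\eta=\{\mu\in W^{1,\infty}(\Omega)\ :\ \|\nabla\mu\|_{L^\infty}<\eta\},$$ equipped with the norm $\|\mu\|_{\mathcal{X}}^2=\int_\Omega\big(|\partial_1\mu|^2+|\partial_2\mu|^2+|\mu|^2\big)\,dx_1dx_2$. Define $\mathrm{R}:\mathcal{X}\to\mathbb{R}$ by $$\mathrm{R}(\mu)=\lambda\int_\Omega\Big(\big|p_1(\mu)\,\partial_1\mu\big|+\big|p_2(\mu)\,\partial_2\mu\big|\Big)\,dx_1dx_2,\qquad p_i(\mu)=\frac{1}{|\partial_i\mu|^2+\beta},\ i=1,2.$$ Then: (1) $\mathrm{R}$ is bounded from below on $\mathcal{X}$ (indeed $\mathrm{R}(\mu)\ge 0$ for all $\mu\in\mathcal{X}$); (2) for every $\delta>0$ there exists $M=M(\delta)>0$ such that $\mathrm{R}(\mu)\le M$ for all $\mu\in\mathcal{X}$ with $\|\mu\|_{\mathcal{X}}\le\delta$; (3) for every $\delta>0$ there exists $L=L(\delta)>0$ such that $|\mathrm{R}(\mu_1)-\mathrm{R}(\mu_2)|\le L\|\mu_1-\mu_2\|_{\mathcal{X}}$ for all $\mu_1,\mu_2\in\mathcal{X}$ with $\max\{\|\mu_1\|_{\mathcal{X}},\|\mu_2\|_{\mathcal{X}}\}\le\delta$.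
   Context: $\partial_1,\partial_2$ denote the first-order (weak) partial derivatives in the $x_1$ and $x_2$ directions and $\nabla=(\partial_1,\partial_2)$. The functional $\mathrm{R}$ is the nonlinear weighted anisotropic total variation with weights $p=(p_1(\mu),p_2(\mu))$ depending on $\mu$ itself. *)

theory Defs
  imports "HOL-Analysis.Analysis"
begin

type_synonym pt = "real \<times> real"

definition pd1 :: "(pt \<Rightarrow> real) \<Rightarrow> pt \<Rightarrow> real" where
  "pd1 f x = frechet_derivative f (at x) (1, 0)"

definition pd2 :: "(pt \<Rightarrow> real) \<Rightarrow> pt \<Rightarrow> real" where
  "pd2 f x = frechet_derivative f (at x) (0, 1)"

text \<open>C-infinity functions on R^2: differentiable everywhere, with all partial
  derivatives again C-infinity (greatest fixed point).\<close>
coinductive smooth2 :: "(pt \<Rightarrow> real) \<Rightarrow> bool" where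
  "(\<forall>x. f differentiable (at x)) \<Longrightarrow> smooth2 (pd1 f) \<Longrightarrow> smooth2 (pd2 f) \<Longrightarrow> smooth2 f"

definition test_fun :: "pt set \<Rightarrow> (pt \<Rightarrow> real) \<Rightarrow> bool" where
  "test_fun \<Omega> \<phi> \<longleftrightarrow> smooth2 \<phi> \<and> compact (closure {x. \<phi> x \<noteq> 0})
      \<and> closure {x. \<phi> x \<noteq> 0} \<subseteq> \<Omega>"

definition Linf :: "pt set \<Rightarrow> (pt \<Rightarrow> real) \<Rightarrow> bool" where
  "Linf \<Omega> f \<longleftrightarrow> f \<in> borel_measurable (lebesgue_on \<Omega>)
      \<and> (\<exists>C. AE x in lebesgue_on \<Omega>. \<bar>f x\<bar> \<le> C)"

definition weak_pd1 :: "pt set \<Rightarrow> (pt \<Rightarrow> real) \<Rightarrow> (pt \<Rightarrow> real) \<Rightarrow> bool" where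
  "weak_pd1 \<Omega> u g \<longleftrightarrow> (\<forall>\<phi>. test_fun \<Omega> \<phi> \<longrightarrow>
      (\<integral>x. u x * pd1 \<phi> x \<partial>lebesgue_on \<Omega>) = - (\<integral>x. g x * \<phi> x \<partial>lebesgue_on \<Omega>))"

definition weak_pd2 :: "pt set \<Rightarrow> (pt \<Rightarrow> real) \<Rightarrow> (pt \<Rightarrow> real) \<Rightarrow> bool" where
  "weak_pd2 \<Omega> u g \<longleftrightarrow> (\<forall>\<phi>. test_fun \<Omega> \<phi> \<longrightarrow>
      (\<integral>x. u x * pd2 \<phi> x \<partial>lebesgue_on \<Omega>) = - (\<integral>x. g x * \<phi> x \<partial>lebesgue_on \<Omega>))"

definition in_W1inf_eta :: "pt set \<Rightarrow> real \<Rightarrow> (pt \<Rightarrow> real) \<Rightarrow> (pt \<Rightarrow> real) \<Rightarrow> (pt \<Rightarrow> real) \<Rightarrow> bool" where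
  "in_W1inf_eta \<Omega> \<eta> u g1 g2 \<longleftrightarrow> Linf \<Omega> u \<and> Linf \<Omega> g1 \<and> Linf \<Omega> g2
      \<and> weak_pd1 \<Omega> u g1 \<and> weak_pd2 \<Omega> u g2
      \<and> (\<exists>c<\<eta>. AE x in lebesgue_on \<Omega>. sqrt ((g1 x)\<^sup>2 + (g2 x)\<^sup>2) \<le> c)"

definition normX :: "pt set \<Rightarrow> (pt \<Rightarrow> real) \<Rightarrow> (pt \<Rightarrow> real) \<Rightarrow> (pt \<Rightarrow> real) \<Rightarrow> real" where
  "normX \<Omega> u g1 g2 = sqrt (\<integral>x. (g1 x)\<^sup>2 + (g2 x)\<^sup>2 + (u x)\<^sup>2 \<partial>lebesgue_on \<Omega>)"

definition Rfun :: "pt set \<Rightarrow> real \<Rightarrow> real \<Rightarrow> (pt \<Rightarrow> real) \<Rightarrow> (pt \<Rightarrow> real) \<Rightarrow> real" where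
  "Rfun \<Omega> lam \<beta> g1 g2 = lam * (\<integral>x. \<bar>(1 / (\<bar>g1 x\<bar>\<^sup>2 + \<beta>)) * g1 x\<bar>
                                   + \<bar>(1 / (\<bar>g2 x\<bar>\<^sup>2 + \<beta>)) * g2 x\<bar> \<partial>lebesgue_on \<Omega>)"

end

theory Submission
  imports Defs
begin

lemma pw_bound: assumes "(b::real) > 0" shows "\<bar>(1 / (\<bar>t\<bar>\<^sup>2 + b)) * t\<bar> \<le> 1 + 1/b"
proof -
  have d: "\<bar>t\<bar>\<^sup>2 + b > 0" using assms by (simp add: add_nonneg_pos)
  have e: "\<bar>(1 / (\<bar>t\<bar>\<^sup>2 + b)) * t\<bar> = \<bar>t\<bar> / (\<bar>t\<bar>\<^sup>2 + b)" using d by (simp add: abs_mult)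
  show ?thesis
  proof (cases "\<bar>t\<bar> \<le> 1")
    case True
    have "\<bar>t\<bar> / (\<bar>t\<bar>\<^sup>2 + b) \<le> 1 / b"
      using True assms by (intro frac_le) auto
    then show ?thesis using e assms by simp
  next
    case False
    have "\<bar>t\<bar> / (\<bar>t\<bar>\<^sup>2 + b) \<le> \<bar>t\<bar> / \<bar>t\<bar>\<^sup>2"
      using False assms by (intro divide_left_mono) (auto simp: add_pos_nonneg)
    also have "\<dots> = \<bar>t\<bar> / (\<bar>t\<bar>*\<bar>t\<bar>)" by (simp add: power2_eq_square)
    also have "\<dots> = 1 / \<bar>t\<bar>" using False by (auto simp: divide_simps)
    also have "\<dots> \<le> 1" using False by simp
    finally show ?thesis using e assms by (smt (verit) zero_less_divide_1_iff)
  qed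
qed

lemma pw_lip_pos: assumes "(b::real) > 0" "s \<ge> 0" "t \<ge> 0"
  shows "\<bar>s/(s\<^sup>2+b) - t/(t\<^sup>2+b)\<bar> \<le> \<bar>s-t\<bar>/b"
proof -
  have ds: "s\<^sup>2+b > 0" "t\<^sup>2+b>0" using assms by (auto simp: add_nonneg_pos)
  have eq: "s/(s\<^sup>2+b) - t/(t\<^sup>2+b) = (s-t)*(b-s*t)/((s\<^sup>2+b)*(t\<^sup>2+b))"
    using ds by (simp add: field_simps) (simp add: algebra_simps power2_eq_square)
  have key: "\<bar>b - s*t\<bar> * b \<le> (s\<^sup>2+b)*(t\<^sup>2+b)"
  proof (cases "s*t \<le> b")
    case True
    have "\<bar>b - s*t\<bar> * b \<le> b*b" using True assms by (auto intro!: mult_right_mono simp: mult_nonneg_nonneg)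
    also have "\<dots> \<le> (s\<^sup>2+b)*(t\<^sup>2+b)" using assms by (intro mult_mono) auto
    finally show ?thesis .
  next
    case False
    have "\<bar>b - s*t\<bar> * b \<le> (s*t)*b" using False assms by auto
    also have "\<dots> \<le> (s\<^sup>2+t\<^sup>2)*b" proof -
      have "s*t \<ge> 0" using assms by simp
      then have "s*t \<le> s\<^sup>2+t\<^sup>2" using sum_squares_bound[of s t] by linarith
      then show ?thesis using assms by (intro mult_right_mono) auto
    qed
    also have "\<dots> \<le> (s\<^sup>2+b)*(t\<^sup>2+b)" using assms by (simp add: algebra_simps power2_eq_square)
    finally show ?thesis .
  qed
  have "\<bar>s/(s\<^sup>2+b) - t/(t\<^sup>2+b)\<bar> = \<bar>s-t\<bar>*\<bar>b-s*t\<bar>/((s\<^sup>2+b)*(t\<^sup>2+b))"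
    using ds by (simp add: eq abs_mult)
  also have "\<dots> \<le> \<bar>s-t\<bar>/b"
    using key ds assms by (simp add: divide_simps mult.assoc mult_left_mono)
  finally show ?thesis .
qed

lemma pw_lip: assumes "(b::real) > 0"
  shows "\<bar>\<bar>(1 / (\<bar>s\<bar>\<^sup>2 + b)) * s\<bar> - \<bar>(1 / (\<bar>t\<bar>\<^sup>2 + b)) * t\<bar>\<bar> \<le> \<bar>s-t\<bar>/b"
proof -
  have ds: "\<bar>s\<bar>\<^sup>2+b > 0" "\<bar>t\<bar>\<^sup>2+b>0" using assms by (auto simp: add_nonneg_pos)
  have "\<bar>(1 / (\<bar>s\<bar>\<^sup>2 + b)) * s\<bar> = \<bar>s\<bar>/(\<bar>s\<bar>\<^sup>2+b)" "\<bar>(1 / (\<bar>t\<bar>\<^sup>2 + b)) * t\<bar> = \<bar>t\<bar>/(\<bar>t\<bar>\<^sup>2+b)"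
    using ds by (auto simp: abs_mult)
  moreover have "\<bar>\<bar>s\<bar>/(\<bar>s\<bar>\<^sup>2+b) - \<bar>t\<bar>/(\<bar>t\<bar>\<^sup>2+b)\<bar> \<le> \<bar>\<bar>s\<bar>-\<bar>t\<bar>\<bar>/b"
    using pw_lip_pos[OF assms, of "\<bar>s\<bar>" "\<bar>t\<bar>"] by simp
  moreover have "\<bar>\<bar>s\<bar>-\<bar>t\<bar>\<bar>/b \<le> \<bar>s-t\<bar>/b" using assms by (intro divide_right_mono) auto
  moreover have "\<bar>s\<^sup>2+b\<bar> = s\<^sup>2+b" "\<bar>t\<^sup>2+b\<bar> = t\<^sup>2+b" using ds by auto
  ultimately show ?thesis by simp
qed

lemma jensen_aux:
  fixes a b :: "'a \<Rightarrow> real"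
  assumes fm: "finite_measure M" and ia: "integrable M a" and ib: "integrable M b"
    and a0: "\<And>x. x \<in> space M \<Longrightarrow> 0 \<le> a x" and ab: "\<And>x. x \<in> space M \<Longrightarrow> (a x)\<^sup>2 \<le> b x"
  shows "integral\<^sup>L M a \<le> sqrt (measure M (space M) * integral\<^sup>L M b)"
proof -
  define I where "I = integral\<^sup>L M a"
  define B where "B = integral\<^sup>L M b"
  define m where "m = measure M (space M)"
  have m0: "m \<ge> 0" unfolding m_def by simp
  have B0: "B \<ge> 0" unfolding B_def
    by (rule integral_nonneg_AE) (auto intro!: AE_I2 order_trans[OF zero_le_power2 ab])
  have main: "2*t*I \<le> B + t\<^sup>2 * m" if t: "t > 0" for t
  proof -
    have ic: "integrable M (\<lambda>x. t\<^sup>2)" using fm finite_measure.integrable_const by blast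
    have "integral\<^sup>L M (\<lambda>x. 2*t * a x) \<le> integral\<^sup>L M (\<lambda>x. b x + t\<^sup>2)"
    proof (rule integral_mono)
      show "integrable M (\<lambda>x. 2*t * a x)" using ia by simp
      show "integrable M (\<lambda>x. b x + t\<^sup>2)" using ib ic by simp
      fix x assume x: "x \<in> space M"
      have "0 \<le> (a x - t)\<^sup>2" by simp
      then have "2*t*a x \<le> (a x)\<^sup>2 + t\<^sup>2" by (simp add: power2_eq_square algebra_simps)
      then show "2*t * a x \<le> b x + t\<^sup>2" using ab[OF x] by linarith
    qed
    also have "\<dots> = B + t\<^sup>2 * m" using ib ic by (simp add: B_def m_def)
    finally show ?thesis by (simp add: I_def)
  qed
  show ?thesis
  proof (cases "I \<le> 0")
    case True
    have "0 \<le> sqrt (m*B)" using B0 m0 by simp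
    then have "I \<le> sqrt(m*B)" using True by linarith
    then show ?thesis by (simp add: I_def B_def m_def)
  next
    case False
    then have I0: "I > 0" by simp
    show ?thesis
    proof (cases "m > 0")
      case True
      have "2*(I/m)*I \<le> B + (I/m)\<^sup>2 * m" using main[of "I/m"] I0 True by simp
      then have "I\<^sup>2 \<le> m * B" using True by (simp add: field_simps power2_eq_square)
      then have "I \<le> sqrt (m*B)" by (simp add: real_le_rsqrt)
      then show ?thesis by (simp add: I_def B_def m_def)
    next
      case False
      then have "m = 0" using m0 by simp
      then have "2*((B+1)/I)*I \<le> B" using main[of "(B+1)/I"] I0 B0 by simp
      then have "2*(B+1) \<le> B" using I0 by simp
      then show ?thesis using B0 by simp
    qed
  qed
qed

lemma Linf_int:
  assumes "Linf \<Omega> f" "\<Omega> \<in> lmeasurable"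
  shows "integrable (lebesgue_on \<Omega>) (\<lambda>x. (f x)\<^sup>2)" "integrable (lebesgue_on \<Omega>) (\<lambda>x. \<bar>f x\<bar>)"
proof -
  have fm: "finite_measure (lebesgue_on \<Omega>)" using assms(2) by (rule finite_measure_lebesgue_on)
  from assms(1) obtain C where m: "f \<in> borel_measurable (lebesgue_on \<Omega>)"
    and C: "AE x in lebesgue_on \<Omega>. \<bar>f x\<bar> \<le> C" unfolding Linf_def by blast
  show "integrable (lebesgue_on \<Omega>) (\<lambda>x. (f x)\<^sup>2)"
  proof (rule finite_measure.integrable_const_bound[OF fm, where B="C\<^sup>2"])
    show "AE x in lebesgue_on \<Omega>. norm ((f x)\<^sup>2) \<le> C\<^sup>2"
      using C by eventually_elim (simp add: abs_le_square_iff[symmetric])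
    show "(\<lambda>x. (f x)\<^sup>2) \<in> borel_measurable (lebesgue_on \<Omega>)" using m by measurable
  qed
  show "integrable (lebesgue_on \<Omega>) (\<lambda>x. \<bar>f x\<bar>)"
  proof (rule finite_measure.integrable_const_bound[OF fm, where B="C"])
    show "AE x in lebesgue_on \<Omega>. norm (\<bar>f x\<bar>) \<le> C"
      using C by eventually_elim simp
    show "(\<lambda>x. \<bar>f x\<bar>) \<in> borel_measurable (lebesgue_on \<Omega>)" using m by measurable
  qed
qed

lemma Linf_diff: assumes "Linf \<Omega> f" "Linf \<Omega> g" shows "Linf \<Omega> (\<lambda>x. f x - g x)"
proof -
  from assms obtain C D where m: "f \<in> borel_measurable (lebesgue_on \<Omega>)" "g \<in> borel_measurable (lebesgue_on \<Omega>)"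
    and C: "AE x in lebesgue_on \<Omega>. \<bar>f x\<bar> \<le> C" and D: "AE x in lebesgue_on \<Omega>. \<bar>g x\<bar> \<le> D"
    unfolding Linf_def by blast
  have "AE x in lebesgue_on \<Omega>. \<bar>f x - g x\<bar> \<le> C + D" using C D by eventually_elim auto
  moreover have "(\<lambda>x. f x - g x) \<in> borel_measurable (lebesgue_on \<Omega>)" using m by measurable
  ultimately show ?thesis unfolding Linf_def by blast
qed

lemma abs4: fixes A B C D :: real shows "\<bar>(A+B)-(C+D)\<bar> \<le> \<bar>A-C\<bar> + \<bar>B-D\<bar>"
  by arith

lemma intF:
  assumes "Linf \<Omega> g1" "Linf \<Omega> g2" "\<Omega> \<in> lmeasurable" "\<beta> > 0"
  shows "integrable (lebesgue_on \<Omega>) (\<lambda>x. \<bar>(1 / (\<bar>g1 x\<bar>\<^sup>2 + \<beta>)) * g1 x\<bar>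
                                   + \<bar>(1 / (\<bar>g2 x\<bar>\<^sup>2 + \<beta>)) * g2 x\<bar>)"
proof (rule finite_measure.integrable_const_bound[where B="2*(1+1/\<beta>)"])
  show "finite_measure (lebesgue_on \<Omega>)" using assms(3) by (rule finite_measure_lebesgue_on)
  have m: "g1 \<in> borel_measurable (lebesgue_on \<Omega>)" "g2 \<in> borel_measurable (lebesgue_on \<Omega>)"
    using assms unfolding Linf_def by auto
  show "AE x in lebesgue_on \<Omega>. norm (\<bar>(1 / (\<bar>g1 x\<bar>\<^sup>2 + \<beta>)) * g1 x\<bar>
                                   + \<bar>(1 / (\<bar>g2 x\<bar>\<^sup>2 + \<beta>)) * g2 x\<bar>) \<le> 2*(1+1/\<beta>)"
  proof (rule AE_I2)
    fix x
    show "norm (\<bar>(1 / (\<bar>g1 x\<bar>\<^sup>2 + \<beta>)) * g1 x\<bar>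
                                   + \<bar>(1 / (\<bar>g2 x\<bar>\<^sup>2 + \<beta>)) * g2 x\<bar>) \<le> 2*(1+1/\<beta>)"
      using pw_bound[OF assms(4), of "g1 x"] pw_bound[OF assms(4), of "g2 x"] by simp
  qed
  show "(\<lambda>x. \<bar>(1 / (\<bar>g1 x\<bar>\<^sup>2 + \<beta>)) * g1 x\<bar>
                                   + \<bar>(1 / (\<bar>g2 x\<bar>\<^sup>2 + \<beta>)) * g2 x\<bar>) \<in> borel_measurable (lebesgue_on \<Omega>)"
    using m by measurable
qed

theorem lemma1:
  fixes \<Omega> :: "(real \<times> real) set" and lam \<beta> \<eta> :: real
  assumes "open \<Omega>" and "connected \<Omega>" and "\<Omega> \<noteq> {}" and "bounded \<Omega>"
    and "lam > 0" and "\<beta> > 0" and "\<eta> > 0"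
  shows "(\<forall>u g1 g2. in_W1inf_eta \<Omega> \<eta> u g1 g2 \<longrightarrow> Rfun \<Omega> lam \<beta> g1 g2 \<ge> 0)
    \<and> (\<forall>\<delta>>0. \<exists>M>0. \<forall>u g1 g2. in_W1inf_eta \<Omega> \<eta> u g1 g2 \<and> normX \<Omega> u g1 g2 \<le> \<delta>
           \<longrightarrow> Rfun \<Omega> lam \<beta> g1 g2 \<le> M)
    \<and> (\<forall>\<delta>>0. \<exists>L>0. \<forall>u g1 g2 v h1 h2.
           in_W1inf_eta \<Omega> \<eta> u g1 g2 \<and> in_W1inf_eta \<Omega> \<eta> v h1 h2
           \<and> max (normX \<Omega> u g1 g2) (normX \<Omega> v h1 h2) \<le> \<delta>
           \<longrightarrow> \<bar>Rfun \<Omega> lam \<beta> g1 g2 - Rfun \<Omega> lam \<beta> h1 h2\<bar>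
               \<le> L * normX \<Omega> (\<lambda>x. u x - v x) (\<lambda>x. g1 x - h1 x) (\<lambda>x. g2 x - h2 x))"
proof -
  note lam = \<open>lam > 0\<close> and bet = \<open>\<beta> > 0\<close>
  have Om: "\<Omega> \<in> lmeasurable" using assms(1,4) by (simp add: lmeasurable_open)
  have fm: "finite_measure (lebesgue_on \<Omega>)" using Om by (rule finite_measure_lebesgue_on)
  define m where "m = measure (lebesgue_on \<Omega>) (space (lebesgue_on \<Omega>))"
  have m0: "m \<ge> 0" by (simp add: m_def)
  have P1: "Rfun \<Omega> lam \<beta> g1 g2 \<ge> 0" for g1 g2
    unfolding Rfun_def using lam by (intro mult_nonneg_nonneg integral_nonneg_AE AE_I2) auto
  have P2: "Rfun \<Omega> lam \<beta> g1 g2 \<le> lam * (m * (2*(1+1/\<beta>)))" if W: "in_W1inf_eta \<Omega> \<eta> u g1 g2" for u g1 g2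
  proof -
    have L: "Linf \<Omega> g1" "Linf \<Omega> g2" using W unfolding in_W1inf_eta_def by auto
    have "(\<integral>x. \<bar>(1 / (\<bar>g1 x\<bar>\<^sup>2 + \<beta>)) * g1 x\<bar> + \<bar>(1 / (\<bar>g2 x\<bar>\<^sup>2 + \<beta>)) * g2 x\<bar> \<partial>lebesgue_on \<Omega>)
       \<le> (\<integral>x. 2*(1+1/\<beta>) \<partial>lebesgue_on \<Omega>)"
      using pw_bound[OF bet] by (intro integral_mono intF[OF L Om bet] finite_measure.integrable_const[OF fm])
        (smt (verit))
    also have "\<dots> = m * (2*(1+1/\<beta>))" by (simp add: m_def)
    finally show ?thesis unfolding Rfun_def using lam by (simp add: mult_left_mono)
  qed
  have P3: "\<bar>Rfun \<Omega> lam \<beta> g1 g2 - Rfun \<Omega> lam \<beta> h1 h2\<bar>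
               \<le> (lam/\<beta> * sqrt (2*m)) * normX \<Omega> (\<lambda>x. u x - v x) (\<lambda>x. g1 x - h1 x) (\<lambda>x. g2 x - h2 x)"
    if W1: "in_W1inf_eta \<Omega> \<eta> u g1 g2" and W2: "in_W1inf_eta \<Omega> \<eta> v h1 h2" for u g1 g2 v h1 h2
  proof -
    have Lg: "Linf \<Omega> u" "Linf \<Omega> g1" "Linf \<Omega> g2" using W1 unfolding in_W1inf_eta_def by auto
    have Lh: "Linf \<Omega> v" "Linf \<Omega> h1" "Linf \<Omega> h2" using W2 unfolding in_W1inf_eta_def by auto
    have Ld: "Linf \<Omega> (\<lambda>x. u x - v x)" "Linf \<Omega> (\<lambda>x. g1 x - h1 x)" "Linf \<Omega> (\<lambda>x. g2 x - h2 x)"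
      using Lg Lh by (auto intro: Linf_diff)
    define Fg where "Fg = (\<lambda>x. \<bar>(1 / (\<bar>g1 x\<bar>\<^sup>2 + \<beta>)) * g1 x\<bar> + \<bar>(1 / (\<bar>g2 x\<bar>\<^sup>2 + \<beta>)) * g2 x\<bar>)"
    define Fh where "Fh = (\<lambda>x. \<bar>(1 / (\<bar>h1 x\<bar>\<^sup>2 + \<beta>)) * h1 x\<bar> + \<bar>(1 / (\<bar>h2 x\<bar>\<^sup>2 + \<beta>)) * h2 x\<bar>)"
    have iFg: "integrable (lebesgue_on \<Omega>) Fg" unfolding Fg_def using intF[OF Lg(2,3) Om bet] .
    have iFh: "integrable (lebesgue_on \<Omega>) Fh" unfolding Fh_def using intF[OF Lh(2,3) Om bet] .
    define a where "a = (\<lambda>x. \<bar>g1 x - h1 x\<bar> + \<bar>g2 x - h2 x\<bar>)"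
    have ia: "integrable (lebesgue_on \<Omega>) a" unfolding a_def
      using Linf_int(2)[OF Ld(2) Om] Linf_int(2)[OF Ld(3) Om] by simp
    define Q where "Q = (\<lambda>x. (g1 x - h1 x)\<^sup>2 + (g2 x - h2 x)\<^sup>2 + (u x - v x)\<^sup>2)"
    have iQ: "integrable (lebesgue_on \<Omega>) Q" unfolding Q_def
      using Linf_int(1)[OF Ld(1) Om] Linf_int(1)[OF Ld(2) Om] Linf_int(1)[OF Ld(3) Om] by simp
    have N: "normX \<Omega> (\<lambda>x. u x - v x) (\<lambda>x. g1 x - h1 x) (\<lambda>x. g2 x - h2 x) = sqrt (integral\<^sup>L (lebesgue_on \<Omega>) Q)"
      by (simp add: normX_def Q_def)
    have "Rfun \<Omega> lam \<beta> g1 g2 - Rfun \<Omega> lam \<beta> h1 h2 = lam * (integral\<^sup>L (lebesgue_on \<Omega>) Fg - integral\<^sup>L (lebesgue_on \<Omega>) Fh)"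
      by (simp add: Rfun_def Fg_def Fh_def right_diff_distrib)
    also have "\<dots> = lam * integral\<^sup>L (lebesgue_on \<Omega>) (\<lambda>x. Fg x - Fh x)" using iFg iFh by simp
    finally have e1: "\<bar>Rfun \<Omega> lam \<beta> g1 g2 - Rfun \<Omega> lam \<beta> h1 h2\<bar> = lam * \<bar>integral\<^sup>L (lebesgue_on \<Omega>) (\<lambda>x. Fg x - Fh x)\<bar>"
      using lam by (simp add: abs_mult)
    have "\<bar>integral\<^sup>L (lebesgue_on \<Omega>) (\<lambda>x. Fg x - Fh x)\<bar> \<le> integral\<^sup>L (lebesgue_on \<Omega>) (\<lambda>x. a x / \<beta>)"
    proof (rule integral_abs_bound_integral)
      show "integrable (lebesgue_on \<Omega>) (\<lambda>x. Fg x - Fh x)" using iFg iFh by simp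
      show "integrable (lebesgue_on \<Omega>) (\<lambda>x. a x / \<beta>)" using ia by simp
      fix x
      have "\<bar>Fg x - Fh x\<bar> \<le> \<bar>\<bar>(1 / (\<bar>g1 x\<bar>\<^sup>2 + \<beta>)) * g1 x\<bar> - \<bar>(1 / (\<bar>h1 x\<bar>\<^sup>2 + \<beta>)) * h1 x\<bar>\<bar>
          + \<bar>\<bar>(1 / (\<bar>g2 x\<bar>\<^sup>2 + \<beta>)) * g2 x\<bar> - \<bar>(1 / (\<bar>h2 x\<bar>\<^sup>2 + \<beta>)) * h2 x\<bar>\<bar>"
        unfolding Fg_def Fh_def by (rule abs4)
      also have "\<dots> \<le> \<bar>g1 x - h1 x\<bar>/\<beta> + \<bar>g2 x - h2 x\<bar>/\<beta>"
        by (rule add_mono[OF pw_lip[OF bet] pw_lip[OF bet]])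
      also have "\<dots> = a x / \<beta>" unfolding a_def by (simp add: add_divide_distrib)
      finally show "\<bar>Fg x - Fh x\<bar> \<le> a x / \<beta>" .
    qed
    also have "\<dots> = integral\<^sup>L (lebesgue_on \<Omega>) a / \<beta>" by simp
    also have "integral\<^sup>L (lebesgue_on \<Omega>) a \<le> sqrt (m * integral\<^sup>L (lebesgue_on \<Omega>) (\<lambda>x. 2 * Q x))"
      unfolding m_def
    proof (rule jensen_aux[OF fm ia])
      show "integrable (lebesgue_on \<Omega>) (\<lambda>x. 2 * Q x)" using iQ by simp
      fix x
      show "0 \<le> a x" by (simp add: a_def)
      have "0 \<le> (\<bar>g1 x - h1 x\<bar> - \<bar>g2 x - h2 x\<bar>)\<^sup>2" by simp
      then have "(a x)\<^sup>2 \<le> 2 * ((g1 x - h1 x)\<^sup>2 + (g2 x - h2 x)\<^sup>2)"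
        unfolding a_def by (simp add: power2_eq_square algebra_simps)
      moreover have "0 \<le> (u x - v x)\<^sup>2" by simp
      ultimately show "(a x)\<^sup>2 \<le> 2 * Q x" unfolding Q_def distrib_left
        using zero_le_power2[of "u x - v x"] by (smt (verit))
    qed
    also have "sqrt (m * integral\<^sup>L (lebesgue_on \<Omega>) (\<lambda>x. 2 * Q x)) = sqrt (2*m) * normX \<Omega> (\<lambda>x. u x - v x) (\<lambda>x. g1 x - h1 x) (\<lambda>x. g2 x - h2 x)"
      by (simp add: N real_sqrt_mult)
    finally have "\<bar>integral\<^sup>L (lebesgue_on \<Omega>) (\<lambda>x. Fg x - Fh x)\<bar> \<le> sqrt (2*m) * normX \<Omega> (\<lambda>x. u x - v x) (\<lambda>x. g1 x - h1 x) (\<lambda>x. g2 x - h2 x) / \<beta>"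
      using bet by (simp add: divide_right_mono)
    then show ?thesis unfolding e1 using lam bet
      by (simp add: mult_left_mono) (smt (verit) mult_left_mono times_divide_eq_left times_divide_eq_right mult.assoc)
  qed
  show ?thesis
  proof (intro conjI allI impI)
    show "Rfun \<Omega> lam \<beta> g1 g2 \<ge> 0" for g1 g2 by (rule P1)
  next
    fix \<delta> :: real
    show "\<exists>M>0. \<forall>u g1 g2. in_W1inf_eta \<Omega> \<eta> u g1 g2 \<and> normX \<Omega> u g1 g2 \<le> \<delta>
           \<longrightarrow> Rfun \<Omega> lam \<beta> g1 g2 \<le> M"
      using P2 lam bet m0 by (intro exI[of _ "lam * (m * (2*(1+1/\<beta>))) + 1"]) (smt (verit) mult_nonneg_nonneg divide_pos_pos)
  next
    fix \<delta> :: real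
    have N0: "normX \<Omega> u g1 g2 \<ge> 0" for u g1 g2 by (simp add: normX_def)
    have "lam/\<beta> * sqrt (2*m) \<ge> 0" using lam bet m0 by simp
    then show "\<exists>L>0. \<forall>u g1 g2 v h1 h2.
           in_W1inf_eta \<Omega> \<eta> u g1 g2 \<and> in_W1inf_eta \<Omega> \<eta> v h1 h2
           \<and> max (normX \<Omega> u g1 g2) (normX \<Omega> v h1 h2) \<le> \<delta>
           \<longrightarrow> \<bar>Rfun \<Omega> lam \<beta> g1 g2 - Rfun \<Omega> lam \<beta> h1 h2\<bar>
               \<le> L * normX \<Omega> (\<lambda>x. u x - v x) (\<lambda>x. g1 x - h1 x) (\<lambda>x. g2 x - h2 x)"
      using P3 N0 by (intro exI[of _ "lam/\<beta> * sqrt (2*m) + 1"]) (smt (verit) mult_right_mono)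
  qed
qed

end
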